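(* In the setting below, for every nonempty $A\subseteq[n]$: $\Pr_{(f,g,h)\sim\Psi}(\neg E_1(f,g,h))\le 2^{-6}$, where $E_1(f,g,h)$ is the event $2^{-16}b\le 2^{-t(f)}|A|\le 2^{-1}b$.
   Context: $[N]:=\{0,\dots,N-1\}$. Fix integers $n\ge1$ and real $0<\varepsilon<1$. Let $b:=2^{\lceil\log_2(9\cdot 2^{23}\varepsilon^{-2})\rceil}$ and $k:=\lceil\tfrac{15}{2}\ln b+16\rceil$. Hash families: for $d\ge1$, identify $[2^d]$ with the field $\mathrm{GF}(2^d)$ via the binary representation (bits as coordinates in a fixed polynomial basis). For integers $k'\ge1$, $N\le 2^d$ and $c\le d$, $\mathcal H_{k'}([N],[2^c])$ is the uniform distribution over coefficient tuples $(a_0,\dots,a_{k'-1})\in\mathrm{GF}(2^d)^{k'}$, each giving the function $x\mapsto(\sum_i a_ix^i)\bmod 2^c$ on $[N]$ (field elements read as integers in $[2^d]$); $\mathcal G_{k'}([N])$ is the uniform distribution over the same tuples giving $x\mapsto \mathrm{tz}(\sum_i a_ix^i)$, where $\mathrm{tz}(y)$ is the number of trailing zeros of the $d$-bit binary representation of $y$ (with $\mathrm{tz}(0)=d$). Here $d$ is a fixed integer with $2^d\ge N$ and $d\ge c$. $\Psi:=\mathcal G_2([n])\times\mathcal H_2([n],[2^5b^2])\times\mathcal H_k([2^5b^2],[b])$ with the product (uniform) distribution; elements $\psi=(f,g,h)$. For fixed nonempty $A\subseteq[n]$: $t(f):=\max_{a\in A}f(a)-\log_2 b+9$. *)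

theory Defs
  imports "HOL-Probability.Probability" "HOL-Library.Z2"
    "HOL-Computational_Algebra.Polynomial_Factorial"
begin

text \<open>(Bits i >= y of y vanish, so the sum over i < y covers all bits.) GF(2^d) is realised as bit poly modulo an irreducible polynomial P of degree d
 (polynomial basis 1, X, ..., X^(d-1)); the integer y < 2^d is identified with the
 residue class whose coefficient of X^i is bit i of y.\<close>

definition poly_of_nat :: "nat \<Rightarrow> bit poly" where
  "poly_of_nat y = (\<Sum>i<y. monom (of_bool (bit y i)) i)"

definition nat_of_poly :: "bit poly \<Rightarrow> nat" where
  "nat_of_poly p = (\<Sum>i\<le>degree p. (if coeff p i = 1 then 2 ^ i else 0))"

definition gf_eval :: "bit poly \<Rightarrow> nat list \<Rightarrow> nat \<Rightarrow> nat" where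
  "gf_eval P as x =
     nat_of_poly ((\<Sum>i<length as. poly_of_nat (as ! i) * poly_of_nat x ^ i) mod P)"

definition coeff_tuples :: "nat \<Rightarrow> nat \<Rightarrow> nat list pmf" where
  "coeff_tuples d k = pmf_of_set {as. length as = k \<and> set as \<subseteq> {..<2 ^ d}}"

text \<open>H_k([N],[2^c]); functions are extended by 0 outside [N].\<close>
definition H_fam :: "bit poly \<Rightarrow> nat \<Rightarrow> nat \<Rightarrow> nat \<Rightarrow> nat \<Rightarrow> (nat \<Rightarrow> nat) pmf" where
  "H_fam P d k N c = map_pmf (\<lambda>as x. if x < N then gf_eval P as x mod 2 ^ c else 0)
                        (coeff_tuples d k)"

definition tz :: "nat \<Rightarrow> nat \<Rightarrow> nat" where
  "tz d y = (if y = 0 then d else multiplicity (2::nat) y)"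

text \<open>G_k([N]); functions are extended by 0 outside [N].\<close>
definition G_fam :: "bit poly \<Rightarrow> nat \<Rightarrow> nat \<Rightarrow> nat \<Rightarrow> (nat \<Rightarrow> nat) pmf" where
  "G_fam P d k N = map_pmf (\<lambda>as x. if x < N then tz d (gf_eval P as x) else 0)
                        (coeff_tuples d k)"

text \<open>log_2 b, where b = 2^ceil(log_2(9 * 2^23 * eps^-2)).\<close>
definition lb :: "real \<Rightarrow> nat" where
  "lb \<epsilon> = nat \<lceil>log 2 (9 * 2 ^ 23 * \<epsilon> powr (-2))\<rceil>"

definition bpar :: "real \<Rightarrow> nat" where
  "bpar \<epsilon> = 2 ^ lb \<epsilon>"

definition kpar :: "real \<Rightarrow> nat" where
  "kpar \<epsilon> = nat \<lceil>15 / 2 * ln (real (bpar \<epsilon>)) + 16\<rceil>"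

definition tpar :: "real \<Rightarrow> nat set \<Rightarrow> (nat \<Rightarrow> nat) \<Rightarrow> int" where
  "tpar \<epsilon> A f = int (Max (f ` A)) - int (lb \<epsilon>) + 9"

definition E1 :: "real \<Rightarrow> nat set \<Rightarrow> (nat \<Rightarrow> nat) \<times> (nat \<Rightarrow> nat) \<times> (nat \<Rightarrow> nat) \<Rightarrow> bool" where
  "E1 \<epsilon> A \<psi> = (case \<psi> of (f, g, h) \<Rightarrow>
     2 powr (-16) * real (bpar \<epsilon>) \<le> 2 powr (- real_of_int (tpar \<epsilon> A f)) * real (card A)
   \<and> 2 powr (- real_of_int (tpar \<epsilon> A f)) * real (card A) \<le> 2 powr (-1) * real (bpar \<epsilon>))"

text \<open>Psi = G_2([n]) x H_2([n],[2^5 b^2]) x H_k([2^5 b^2],[b]), each family with its own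
 field GF(2^d_i) given by an irreducible polynomial P_i of degree d_i.\<close>
definition Psi :: "real \<Rightarrow> nat \<Rightarrow> bit poly \<Rightarrow> nat \<Rightarrow> bit poly \<Rightarrow> nat \<Rightarrow> bit poly \<Rightarrow> nat
     \<Rightarrow> ((nat \<Rightarrow> nat) \<times> (nat \<Rightarrow> nat) \<times> (nat \<Rightarrow> nat)) pmf" where
  "Psi \<epsilon> n P1 d1 P2 d2 P3 d3 =
     pair_pmf (G_fam P1 d1 2 n)
       (pair_pmf (H_fam P2 d2 2 n (5 + 2 * lb \<epsilon>))
                 (H_fam P3 d3 (kpar \<epsilon>) (2 ^ 5 * bpar \<epsilon> ^ 2) (lb \<epsilon>)))"

end

theory Submission imports Defs "HOL-Computational_Algebra.Field_as_Ring" "HOL-Library.Discrete_Functions" begin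

instantiation bit ::
  "{unique_euclidean_ring, normalization_euclidean_semiring, normalization_semidom_multiplicative}"
begin
definition [simp]: "normalize_bit = (normalize_field :: bit \<Rightarrow> _)"
definition [simp]: "unit_factor_bit = (unit_factor_field :: bit \<Rightarrow> _)"
definition [simp]: "euclidean_size_bit = (euclidean_size_field :: bit \<Rightarrow> _)"
definition [simp]: "division_segment (x :: bit) = 1"
instance
  by standard
    (simp_all add: dvd_field_iff field_split_simps modulo_bit_unfold split: if_splits)
end

instantiation bit :: euclidean_ring_gcd
begin
definition gcd_bit :: "bit \<Rightarrow> bit \<Rightarrow> bit" where
  "gcd_bit = Euclidean_Algorithm.gcd"
definition lcm_bit :: "bit \<Rightarrow> bit \<Rightarrow> bit" where
  "lcm_bit = Euclidean_Algorithm.lcm"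
definition Gcd_bit :: "bit set \<Rightarrow> bit" where
 "Gcd_bit = Euclidean_Algorithm.Gcd"
definition Lcm_bit :: "bit set \<Rightarrow> bit" where
 "Lcm_bit = Euclidean_Algorithm.Lcm"
instance by standard (simp_all add: gcd_bit_def lcm_bit_def Gcd_bit_def Lcm_bit_def)
end

instance bit :: field_gcd ..



lemma coeff_poly_of_nat: "coeff (poly_of_nat y) i = of_bool (bit y i)"
proof -
  have "coeff (poly_of_nat y) i = (\<Sum>j<y. if j = i then of_bool (bit y i) else 0)"
    unfolding poly_of_nat_def by (simp add: coeff_sum coeff_monom)
  also have "\<dots> = (if i < y then of_bool (bit y i) else 0)"
    by (simp add: sum.delta)
  also have "\<dots> = of_bool (bit y i)"
  proof (cases "i < y")
    case False
    then have "y < 2 ^ i"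
      by (meson less_exp not_less order_le_less_trans)
    then have "\<not> bit y i" by (simp add: bit_nat_def)
    then show ?thesis using False by simp
  qed simp
  finally show ?thesis .
qed

lemma bit_sum_pow2: "finite I \<Longrightarrow> bit (\<Sum>i\<in>I. (2::nat) ^ i) j \<longleftrightarrow> j \<in> I"
proof (induction I arbitrary: j rule: finite_induct)
  case empty then show ?case by simp
next
  case (insert x I)
  have dis: "\<not> bit ((2::nat) ^ x) m \<or> \<not> bit (\<Sum>i\<in>I. (2::nat) ^ i) m" for m
    using insert.IH[of m] insert.hyps(2) by (simp add: bit_exp_iff)
  have "bit (2 ^ x + (\<Sum>i\<in>I. (2::nat) ^ i)) j \<longleftrightarrow> bit ((2::nat) ^ x) j \<or> bit (\<Sum>i\<in>I. (2::nat) ^ i) j"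
    by (rule bit_disjunctive_add_iff) (rule dis)
  then show ?case using insert.hyps insert.IH[of j] by (simp add: bit_exp_iff)
qed

lemma nat_of_poly_alt: "nat_of_poly q = (\<Sum>i\<in>{i. i \<le> degree q \<and> coeff q i = 1}. 2 ^ i)"
proof -
  have "{i. i \<le> degree q \<and> coeff q i = 1} = {i \<in> {..degree q}. coeff q i = 1}" by auto
  then show ?thesis unfolding nat_of_poly_def by (simp only: sum.inter_filter[OF finite_atMost])
qed

lemma bit_nat_of_poly: "bit (nat_of_poly q) j \<longleftrightarrow> coeff q j = 1"
proof -
  have "bit (nat_of_poly q) j \<longleftrightarrow> j \<le> degree q \<and> coeff q j = 1"
    unfolding nat_of_poly_alt by (subst bit_sum_pow2) auto
  also have "\<dots> \<longleftrightarrow> coeff q j = 1"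
    using le_degree[of q j] by auto
  finally show ?thesis .
qed

lemma bit_cases': "(b::bit) = of_bool (b = 1)"
  by (cases b) auto

lemma poly_of_nat_of_poly[simp]: "poly_of_nat (nat_of_poly q) = q"
proof (rule poly_eqI)
  fix n show "coeff (poly_of_nat (nat_of_poly q)) n = coeff q n"
    by (cases "coeff q n") (auto simp: coeff_poly_of_nat bit_nat_of_poly)
qed

lemma nat_of_poly_of_nat[simp]: "nat_of_poly (poly_of_nat y) = y"
  by (rule bit_eqI) (simp add: bit_nat_of_poly coeff_poly_of_nat)

lemma degree_poly_of_nat: assumes "y < 2 ^ d" "d \<ge> 1" shows "degree (poly_of_nat y) < d"
proof -
  have "coeff (poly_of_nat y) i = 0" if "i \<ge> d" for i
  proof -
    have "y < 2 ^ i" using assms that by (meson order_less_le_trans power_increasing one_le_numeral)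
    then show ?thesis by (simp add: coeff_poly_of_nat bit_nat_def)
  qed
  then have "degree (poly_of_nat y) \<le> d - 1"
    by (intro degree_le) auto
  then show ?thesis using assms by linarith
qed

lemma nat_of_poly_less: assumes "degree q < d" shows "nat_of_poly q < 2 ^ d"
proof -
  have "take_bit d (nat_of_poly q) = nat_of_poly q"
  proof (rule bit_eqI)
    fix n
    have "coeff q n = 1 \<Longrightarrow> n < d" using assms le_degree[of q n] by fastforce
    then show "bit (take_bit d (nat_of_poly q)) n = bit (nat_of_poly q) n"
      by (auto simp: bit_take_bit_iff bit_nat_of_poly)
  qed
  then show ?thesis by (metis take_bit_nat_less_exp)
qed


definition vl :: "bit poly \<Rightarrow> nat \<Rightarrow> nat \<times> nat \<Rightarrow> nat" where
  "vl P x p = nat_of_poly ((poly_of_nat (fst p) + poly_of_nat (snd p) * poly_of_nat x) mod P)"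

lemma gf_eval_2: "gf_eval P [a0, a1] x = vl P x (a0, a1)"
  unfolding gf_eval_def vl_def by (simp add: numeral_2_eq_2)

lemma small_dvd_zero:
  fixes P q :: "bit poly"
  assumes "P dvd q" "degree q < degree P" shows "q = 0"
  using dvd_imp_degree_le[OF assms(1)] assms(2) by fastforce

lemma nat_of_poly_inj: "nat_of_poly p = nat_of_poly q \<Longrightarrow> p = q"
  by (metis poly_of_nat_of_poly)

lemma poly_of_nat_inj: "poly_of_nat x = poly_of_nat y \<Longrightarrow> x = y"
  by (metis nat_of_poly_of_nat)

context
  fixes P :: "bit poly" and d :: nat
  assumes degP: "degree P = d" and irrP: "irreducible P" and d1: "d \<ge> 1"
begin

lemma P_nz: "P \<noteq> 0" using degP d1 by auto

lemma vl_less: "vl P x p < 2 ^ d"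
proof -
  have "degree (q mod P) < d" for q :: "bit poly"
    using degree_mod_less[OF P_nz, of q] degP d1 by auto
  then show ?thesis unfolding vl_def by (rule nat_of_poly_less)
qed

lemma deg_small: "y < 2 ^ d \<Longrightarrow> degree (poly_of_nat y) < d"
  using degree_poly_of_nat d1 by blast

lemma deg_diff_small: "y < 2 ^ d \<Longrightarrow> z < 2 ^ d \<Longrightarrow> degree (poly_of_nat y - poly_of_nat z) < d"
  using degree_diff_le_max[of "poly_of_nat y" "poly_of_nat z"] deg_small[of y] deg_small[of z] by linarith

lemma eq_if_dvd: "y < 2 ^ d \<Longrightarrow> z < 2 ^ d \<Longrightarrow> P dvd (poly_of_nat y - poly_of_nat z) \<Longrightarrow> y = z"
  using small_dvd_zero[of P "poly_of_nat y - poly_of_nat z"] deg_diff_small[of y z] degP poly_of_nat_inj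
  by auto

abbreviation "S2 \<equiv> {..<(2::nat)^d} \<times> {..<(2::nat)^d}"

lemma vl_eq_dvd:
  assumes "vl P x p = vl P x q"
  shows "P dvd (poly_of_nat (fst p) - poly_of_nat (fst q)) + (poly_of_nat (snd p) - poly_of_nat (snd q)) * poly_of_nat x"
proof -
  have "(poly_of_nat (fst p) + poly_of_nat (snd p) * poly_of_nat x) mod P =
        (poly_of_nat (fst q) + poly_of_nat (snd q) * poly_of_nat x) mod P"
    using assms unfolding vl_def by (rule nat_of_poly_inj)
  then have "P dvd (poly_of_nat (fst p) + poly_of_nat (snd p) * poly_of_nat x) -
        (poly_of_nat (fst q) + poly_of_nat (snd q) * poly_of_nat x)"
    by (simp add: mod_eq_dvd_iff)
  then show ?thesis by (simp add: algebra_simps)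
qed

lemma inj1: "inj_on (\<lambda>p. (vl P x p, snd p)) S2"
proof (rule inj_onI)
  fix p q assume p: "p \<in> S2" and q: "q \<in> S2" and e: "(vl P x p, snd p) = (vl P x q, snd q)"
  then have "P dvd (poly_of_nat (fst p) - poly_of_nat (fst q))"
    using vl_eq_dvd[of x p q] by simp
  then have "fst p = fst q" using p q eq_if_dvd by auto
  then show "p = q" using e by (simp add: prod_eq_iff)
qed

lemma inj2:
  assumes x: "x < 2 ^ d" and y: "y < 2 ^ d" and xy: "x \<noteq> y"
  shows "inj_on (\<lambda>p. (vl P x p, vl P y p)) S2"
proof (rule inj_onI)
  fix p q assume p: "p \<in> S2" and q: "q \<in> S2" and e: "(vl P x p, vl P y p) = (vl P x q, vl P y q)"
  define D0 where "D0 = poly_of_nat (fst p) - poly_of_nat (fst q)"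
  define D1 where "D1 = poly_of_nat (snd p) - poly_of_nat (snd q)"
  have h1: "P dvd D0 + D1 * poly_of_nat x" using vl_eq_dvd[of x p q] e by (simp add: D0_def D1_def)
  have h2: "P dvd D0 + D1 * poly_of_nat y" using vl_eq_dvd[of y p q] e by (simp add: D0_def D1_def)
  have "P dvd (D0 + D1 * poly_of_nat x) - (D0 + D1 * poly_of_nat y)"
    using h1 h2 by (rule dvd_diff)
  then have "P dvd D1 * (poly_of_nat x - poly_of_nat y)" by (simp add: algebra_simps)
  moreover have "prime_elem P" using irrP by (simp add: prime_elem_iff_irreducible)
  ultimately have "P dvd D1 \<or> P dvd (poly_of_nat x - poly_of_nat y)"
    by (simp add: prime_elem_dvd_mult_iff)
  moreover have "\<not> P dvd (poly_of_nat x - poly_of_nat y)" using eq_if_dvd x y xy by blast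
  ultimately have "P dvd D1" by blast
  then have s: "snd p = snd q" using p q eq_if_dvd unfolding D1_def by auto
  then have "P dvd D0" using h1 by (simp add: D1_def)
  then have "fst p = fst q" using p q eq_if_dvd unfolding D0_def by auto
  then show "p = q" using s by (simp add: prod_eq_iff)
qed

lemma bij_count:
  assumes fin: "finite S" and inj: "inj_on \<phi> S" and img: "\<phi> ` S \<subseteq> S"
  shows "card {p \<in> S. Q (\<phi> p)} = card {q \<in> S. Q q}"
proof -
  have eq: "\<phi> ` S = S"
    using card_subset_eq[OF fin img] card_image[OF inj] by simp
  have "\<phi> ` {p \<in> S. Q (\<phi> p)} = {q \<in> S. Q q}"
  proof
    show "{q \<in> S. Q q} \<subseteq> \<phi> ` {p \<in> S. Q (\<phi> p)}"
    proof
      fix q assume "q \<in> {q \<in> S. Q q}"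
      then obtain p where "p \<in> S" "q = \<phi> p" "Q q" using eq by blast
      then show "q \<in> \<phi> ` {p \<in> S. Q (\<phi> p)}" by blast
    qed
  qed (use eq in auto)
  moreover have "inj_on \<phi> {p \<in> S. Q (\<phi> p)}" using inj by (rule inj_on_subset) auto
  ultimately show ?thesis by (metis card_image)
qed

end

lemma card_dvd_pow: assumes "t \<le> d" shows "card {u \<in> {..<(2::nat)^d}. 2 ^ t dvd u} = 2 ^ (d - t)"
proof -
  have "{u \<in> {..<(2::nat)^d}. 2 ^ t dvd u} = (\<lambda>z. 2 ^ t * z) ` {..<2 ^ (d - t)}"
  proof
    have e: "(2::nat) ^ d = 2 ^ t * 2 ^ (d - t)" using assms by (simp add: power_add[symmetric])
    show "{u \<in> {..<(2::nat)^d}. 2 ^ t dvd u} \<subseteq> (\<lambda>z. 2 ^ t * z) ` {..<2 ^ (d - t)}"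
      using e by (auto elim!: dvdE)
    show "(\<lambda>z. 2 ^ t * z) ` {..<2 ^ (d - t)} \<subseteq> {u \<in> {..<(2::nat)^d}. 2 ^ t dvd u}"
      using e by auto
  qed
  moreover have "inj_on (\<lambda>z. (2::nat) ^ t * z) {..<2 ^ (d - t)}" by (auto intro: inj_onI)
  ultimately show ?thesis by (simp add: card_image)
qed


context
  fixes P :: "bit poly" and d :: nat
  assumes degP: "degree P = d" and irrP: "irreducible P" and d1: "d \<ge> 1"
begin

lemma count1:
  assumes x: "x < 2 ^ d" and t: "t \<le> d"
  shows "card {p \<in> S2 d. 2 ^ t dvd vl P x p} = 2 ^ (d - t) * 2 ^ d"
proof -
  have "card {p \<in> S2 d. 2 ^ t dvd fst ((\<lambda>p. (vl P x p, snd p)) p)} = card {q \<in> S2 d. 2 ^ t dvd fst q}"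
    by (rule bij_count[OF degP irrP d1]) (auto intro: inj1[OF degP irrP d1] vl_less[OF degP irrP d1])
  also have "{q \<in> S2 d. 2 ^ t dvd fst q} = {u \<in> {..<(2::nat)^d}. 2 ^ t dvd u} \<times> {..<2^d}" by auto
  also have "card \<dots> = 2 ^ (d - t) * 2 ^ d" by (simp only: card_cartesian_product card_dvd_pow[OF t] card_lessThan)
  finally show ?thesis by simp
qed

lemma count2:
  assumes x: "x < 2 ^ d" and y: "y < 2 ^ d" and xy: "x \<noteq> y" and t: "t \<le> d"
  shows "card {p \<in> S2 d. 2 ^ t dvd vl P x p \<and> 2 ^ t dvd vl P y p} = 2 ^ (d - t) * 2 ^ (d - t)"
proof -
  have "card {p \<in> S2 d. (\<lambda>q. 2 ^ t dvd fst q \<and> 2 ^ t dvd snd q) ((\<lambda>p. (vl P x p, vl P y p)) p)}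
      = card {q \<in> S2 d. 2 ^ t dvd fst q \<and> 2 ^ t dvd snd q}"
    by (rule bij_count[OF degP irrP d1]) (auto intro: inj2[OF degP irrP d1 x y xy] vl_less[OF degP irrP d1])
  also have "{q \<in> S2 d. 2 ^ t dvd fst q \<and> 2 ^ t dvd snd q} = {u \<in> {..<(2::nat)^d}. 2 ^ t dvd u} \<times> {u \<in> {..<(2::nat)^d}. 2 ^ t dvd u}" by auto
  also have "card \<dots> = 2 ^ (d - t) * 2 ^ (d - t)" by (simp only: card_cartesian_product card_dvd_pow[OF t])
  finally show ?thesis by simp
qed

end

lemma tz_ge: assumes "t \<le> d" shows "t \<le> tz d y \<longleftrightarrow> 2 ^ t dvd y"
proof (cases "y = 0")
  case True then show ?thesis using assms by (simp add: tz_def)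
next
  case False
  then show ?thesis by (simp add: tz_def power_dvd_iff_le_multiplicity)
qed

lemma tz_le: assumes "y < 2 ^ d" shows "tz d y \<le> d"
proof (cases "y = 0")
  case True then show ?thesis by (simp add: tz_def)
next
  case False
  have "2 ^ multiplicity 2 y dvd y" by (rule multiplicity_dvd)
  then have "2 ^ multiplicity 2 y \<le> y" using False by (simp add: dvd_imp_le)
  then have "(2::nat) ^ multiplicity 2 y < 2 ^ d" using assms by linarith
  then show ?thesis using False by (simp add: tz_def)
qed

lemma card_real_sum: "finite S \<Longrightarrow> real (card {p \<in> S. R p}) = (\<Sum>p\<in>S. of_bool (R p))"
proof -
  assume f: "finite S"
  have "(\<Sum>p\<in>S. (of_bool (R p) :: real)) = (\<Sum>p\<in>S. if R p then 1 else 0)" by (simp add: of_bool_def)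
  also have "\<dots> = (\<Sum>p\<in>{p \<in> S. R p}. 1)" by (rule sum.inter_filter[OF f, symmetric])
  finally show ?thesis by simp
qed

lemma second_moment:
  fixes S :: "'a set" and A :: "'b set" and I :: "'b \<Rightarrow> 'a \<Rightarrow> bool" and q :: real
  assumes fS: "finite S" and fA: "finite A" and q: "q > 0" and Ane: "A \<noteq> {}"
    and c1: "\<And>a. a \<in> A \<Longrightarrow> real (card {p \<in> S. I a p}) = q * card S"
    and c2: "\<And>a b. a \<in> A \<Longrightarrow> b \<in> A \<Longrightarrow> a \<noteq> b \<Longrightarrow> real (card {p \<in> S. I a p \<and> I b p}) \<le> q^2 * card S"
  shows "real (card {p \<in> S. \<forall>a\<in>A. \<not> I a p}) * (card A * q) \<le> card S"
proof -
  define N where "N = real (card S)"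
  define \<mu> where "\<mu> = real (card A) * q"
  define X where "X p = (\<Sum>a\<in>A. of_bool (I a p) :: real)" for p
  have mu_pos: "\<mu> > 0" using q Ane fA by (simp add: \<mu>_def card_gt_0_iff)
  have sX: "(\<Sum>p\<in>S. X p) = \<mu> * N"
  proof -
    have "(\<Sum>p\<in>S. X p) = (\<Sum>a\<in>A. \<Sum>p\<in>S. of_bool (I a p))" unfolding X_def by (rule sum.swap)
    also have "\<dots> = (\<Sum>a\<in>A. q * N)" using c1 by (simp add: card_real_sum[OF fS, symmetric] N_def)
    finally show ?thesis by (simp add: \<mu>_def)
  qed
  have pair: "(\<Sum>p\<in>S. of_bool (I a p) * of_bool (I b p)) \<le> q^2 * N + (if a = b then q * N else 0)"
    if "a \<in> A" "b \<in> A" for a b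
  proof -
    have e: "(\<Sum>p\<in>S. (of_bool (I a p) * of_bool (I b p) :: real)) = real (card {p \<in> S. I a p \<and> I b p})"
      by (simp add: card_real_sum[OF fS] of_bool_conj)
    show ?thesis
    proof (cases "a = b")
      case True
      then show ?thesis using e c1[OF that(1)] q by (simp add: N_def)
    next
      case False
      then show ?thesis using e c2[OF that False] by (simp add: N_def)
    qed
  qed
  have sX2: "(\<Sum>p\<in>S. X p ^ 2) \<le> \<mu>^2 * N + \<mu> * N"
  proof -
    have "(\<Sum>p\<in>S. X p ^ 2) = (\<Sum>p\<in>S. \<Sum>a\<in>A. \<Sum>b\<in>A. of_bool (I a p) * of_bool (I b p))"
      unfolding X_def by (simp add: power2_eq_square sum_product)
    also have "\<dots> = (\<Sum>a\<in>A. \<Sum>b\<in>A. \<Sum>p\<in>S. of_bool (I a p) * of_bool (I b p))"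
      by (simp add: sum.swap[of _ S] sum.swap[of _ S A])
    also have "\<dots> \<le> (\<Sum>a\<in>A. \<Sum>b\<in>A. q^2 * N + (if a = b then q * N else 0))"
      by (intro sum_mono pair)
    also have "\<dots> = real (card A) * real (card A) * (q^2 * N) + real (card A) * (q * N)"
      using fA by (simp add: sum.distrib sum.delta algebra_simps)
    finally show ?thesis by (simp add: \<mu>_def power2_eq_square algebra_simps)
  qed
  have var: "(\<Sum>p\<in>S. (X p - \<mu>) ^ 2) \<le> \<mu> * N"
  proof -
    have a: "(\<Sum>p\<in>S. (X p - \<mu>) ^ 2) = (\<Sum>p\<in>S. X p ^ 2) - (\<Sum>p\<in>S. 2 * \<mu> * X p) + (\<Sum>p\<in>S. \<mu>^2)"
      by (simp add: power2_diff sum.distrib sum_subtractf mult.commute mult.left_commute)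
    have b: "(\<Sum>p\<in>S. 2 * \<mu> * X p) = 2 * \<mu> * (\<Sum>p\<in>S. X p)" by (rule sum_distrib_left[symmetric])
    have "(\<Sum>p\<in>S. (X p - \<mu>) ^ 2) = (\<Sum>p\<in>S. X p ^ 2) - 2 * \<mu> * (\<Sum>p\<in>S. X p) + \<mu>^2 * N"
      using a b by (simp add: N_def)
    then show ?thesis using sX sX2 by (simp add: power2_eq_square algebra_simps)
  qed
  define Z where "Z = {p \<in> S. \<forall>a\<in>A. \<not> I a p}"
  have "real (card Z) * \<mu>^2 = (\<Sum>p\<in>Z. (X p - \<mu>) ^ 2)"
    by (simp add: Z_def X_def)
  also have "\<dots> \<le> (\<Sum>p\<in>S. (X p - \<mu>) ^ 2)"
    by (rule sum_mono2[OF fS]) (auto simp: Z_def)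
  also have "\<dots> \<le> \<mu> * N" by (rule var)
  finally have "real (card Z) * \<mu> * \<mu> \<le> N * \<mu>" by (simp add: power2_eq_square algebra_simps)
  then have "real (card Z) * \<mu> \<le> N" using mu_pos by simp
  then show ?thesis by (simp add: Z_def \<mu>_def N_def)
qed


lemma pw2: "2 powr (real L + x) = 2 powr x * real ((2::nat) ^ L)"
  by (simp add: powr_add powr_realpow)

lemma good_lemma:
  fixes L m k c :: nat
  assumes "2 ^ k \<le> c" "c < 2 * 2 ^ k" "m \<le> k + 7" "k \<le> m + 7"
  shows "2 powr (-16) * real (2 ^ L) \<le> 2 powr (- real_of_int (int m - int L + 9)) * real c
       \<and> 2 powr (- real_of_int (int m - int L + 9)) * real c \<le> 2 powr (-1) * real (2 ^ L)"
proof -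
  have c1: "2 powr (real k) \<le> real c" using assms(1) by (simp add: powr_realpow)
  have "c \<le> 2 * 2 ^ k" using assms(2) by simp
  then have "real c \<le> real (2 * 2 ^ k)" by (simp only: of_nat_le_iff)
  then have c2: "real c \<le> 2 powr (real k + 1)" by (simp add: powr_add powr_realpow)
  have eL: "real (2 ^ L) = 2 powr real L" by (simp add: powr_realpow)
  define r where "r = - real_of_int (int m - int L + 9)"
  have r: "r = real L - real m - 9" by (simp add: r_def)
  have "2 powr (-16) * real (2 ^ L) = 2 powr (real L - 16)" using pw2[of L "-16"] by simp
  also have "\<dots> \<le> 2 powr (r + real k)" using assms(3) by (simp add: r)
  also have "\<dots> = 2 powr r * 2 powr (real k)" by (simp add: powr_add)
  also have "\<dots> \<le> 2 powr r * real c" using c1 by simp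
  finally have g1: "2 powr (-16) * real (2 ^ L) \<le> 2 powr r * real c" .
  have "2 powr r * real c \<le> 2 powr r * 2 powr (real k + 1)" using c2 by simp
  also have "\<dots> = 2 powr (r + real k + 1)" by (simp add: powr_add)
  also have "\<dots> \<le> 2 powr (real L - 1)" using assms(4) by (simp add: r)
  also have "\<dots> = 2 powr (-1) * real (2 ^ L)" using pw2[of L "-1"] by simp
  finally show ?thesis using g1 by (simp add: r_def)
qed

lemma prob_fst_pair:
  "measure_pmf.prob (pair_pmf M N) {\<psi>. Q (fst \<psi>)} = measure_pmf.prob M {f. Q f}"
proof -
  have "measure_pmf.prob (map_pmf fst (pair_pmf M N)) {f. Q f} = measure_pmf.prob (pair_pmf M N) {\<psi>. Q (fst \<psi>)}"
    by (simp add: measure_map_pmf vimage_def)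
  then show ?thesis by (simp add: map_fst_pair_pmf)
qed

lemma prob_G:
  assumes d1: "d \<ge> 1"
  shows "measure_pmf.prob (G_fam P d 2 n) {f. Q f}
    = real (card {p \<in> S2 d. Q (\<lambda>x. if x < n then tz d (vl P x p) else 0)}) / real (card (S2 d))"
proof -
  define Lst where "Lst = {as :: nat list. length as = 2 \<and> set as \<subseteq> {..<2 ^ d}}"
  define Fl where "Fl = (\<lambda>as x. if x < n then tz d (gf_eval P as x) else 0)"
  define emb where "emb = (\<lambda>p :: nat \<times> nat. [fst p, snd p])"
  have Lst: "Lst = emb ` S2 d"
  proof
    show "Lst \<subseteq> emb ` S2 d"
    proof
      fix as assume "as \<in> Lst"
      then obtain a b where "as = [a, b]" "a < 2 ^ d" "b < 2 ^ d"
        unfolding Lst_def by (auto simp: numeral_2_eq_2 length_Suc_conv)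
      then show "as \<in> emb ` S2 d" unfolding emb_def by (auto intro!: image_eqI[of _ _ "(a, b)"])
    qed
  qed (auto simp: Lst_def emb_def)
  have inj: "inj_on emb (S2 d)" by (auto simp: emb_def intro!: inj_onI simp: prod_eq_iff)
  have "emb (0, 0) \<in> Lst" unfolding Lst by (intro imageI) simp
  then have fin: "finite Lst" "Lst \<noteq> {}" unfolding Lst by blast+
  have Fe': "Fl (emb (a, b)) = (\<lambda>x. if x < n then tz d (vl P x (a, b)) else 0)" for a b
    unfolding Fl_def emb_def fst_conv snd_conv gf_eval_2 ..
  have Fe: "Fl (emb p) = (\<lambda>x. if x < n then tz d (vl P x p) else 0)" for p
    using Fe'[of "fst p" "snd p"] unfolding prod.collapse .
  have "measure_pmf.prob (G_fam P d 2 n) {f. Q f} = measure_pmf.prob (coeff_tuples d 2) (Fl -` {f. Q f})"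
    by (simp add: G_fam_def measure_map_pmf Fl_def)
  also have "\<dots> = real (card (Lst \<inter> Fl -` {f. Q f})) / real (card Lst)"
    unfolding coeff_tuples_def Lst_def[symmetric] by (rule measure_pmf_of_set[OF fin(2) fin(1)])
  also have "Lst \<inter> Fl -` {f. Q f} = emb ` {p \<in> S2 d. Q (Fl (emb p))}"
    unfolding Lst by auto
  also have "emb ` {p \<in> S2 d. Q (Fl (emb p))} = emb ` {p \<in> S2 d. Q (\<lambda>x. if x < n then tz d (vl P x p) else 0)}"
    by (simp only: Fe)
  also have "card \<dots> = card {p \<in> S2 d. Q (\<lambda>x. if x < n then tz d (vl P x p) else 0)}"
    by (rule card_image) (rule inj_on_subset[OF inj], auto)
  also have "card Lst = card (S2 d)" unfolding Lst by (rule card_image[OF inj])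
  finally show ?thesis .
qed

theorem lemma9:
  fixes n :: nat and \<epsilon> :: real and A :: "nat set"
    and P1 P2 P3 :: "bit poly" and d1 d2 d3 :: nat
  assumes "n \<ge> 1" and "0 < \<epsilon>" and "\<epsilon> < 1"
    and "A \<subseteq> {..<n}" and "A \<noteq> {}"
    and "d1 \<ge> 1" and "degree P1 = d1" and "irreducible P1" and "2 ^ d1 \<ge> n"
    and "degree P2 = d2" and "irreducible P2" and "2 ^ d2 \<ge> n"
    and "d2 \<ge> 5 + 2 * lb \<epsilon>"
    and "degree P3 = d3" and "irreducible P3" and "2 ^ d3 \<ge> 2 ^ 5 * bpar \<epsilon> ^ 2"
    and "d3 \<ge> lb \<epsilon>"
  shows "measure_pmf.prob (Psi \<epsilon> n P1 d1 P2 d2 P3 d3) {\<psi>. \<not> E1 \<epsilon> A \<psi>} \<le> 2 powr (-6)"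
proof -
  note An = assms(4) and Ane = assms(5) and d1 = assms(6) and degP = assms(7) and irrP = assms(8) and nd = assms(9)
  define d where "d = d1"
  define L where "L = lb \<epsilon>"
  define Good where "Good f \<longleftrightarrow>
     2 powr (-16) * real (bpar \<epsilon>) \<le> 2 powr (- real_of_int (tpar \<epsilon> A f)) * real (card A)
   \<and> 2 powr (- real_of_int (tpar \<epsilon> A f)) * real (card A) \<le> 2 powr (-1) * real (bpar \<epsilon>)" for f
  have E1eq: "E1 \<epsilon> A \<psi> = Good (fst \<psi>)" for \<psi>
    by (cases \<psi>) (simp add: E1_def Good_def)
  define F where "F p = (\<lambda>x. if x < n then tz d (vl P1 x p) else 0)" for p
  define N where "N = real (card (S2 d))"
  have Npos: "N = 2 ^ d * 2 ^ d" by (simp add: N_def card_cartesian_product)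
  have finA: "finite A" using An finite_subset by blast
  have aless: "a < 2 ^ d" if "a \<in> A" for a using that An nd d_def by auto
  have FA: "F p a = tz d (vl P1 a p)" if "a \<in> A" for a p using that An by (auto simp: F_def)
  have prob: "measure_pmf.prob (Psi \<epsilon> n P1 d1 P2 d2 P3 d3) {\<psi>. \<not> E1 \<epsilon> A \<psi>}
      = real (card {p \<in> S2 d. \<not> Good (F p)}) / N"
  proof -
    have "{\<psi>. \<not> E1 \<epsilon> A \<psi>} = {\<psi>. (\<lambda>f. \<not> Good f) (fst \<psi>)}" by (simp add: E1eq)
    then have "measure_pmf.prob (Psi \<epsilon> n P1 d1 P2 d2 P3 d3) {\<psi>. \<not> E1 \<epsilon> A \<psi>}
       = measure_pmf.prob (G_fam P1 d1 2 n) {f. \<not> Good f}"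
      using prob_fst_pair[where Q="\<lambda>f. \<not> Good f" and M="G_fam P1 d1 2 n"]
      unfolding Psi_def by (simp add: E1eq)
    also have "\<dots> = real (card {p \<in> S2 d1. \<not> Good (\<lambda>x. if x < n then tz d1 (vl P1 x p) else 0)})
        / real (card (S2 d1))"
      by (rule prob_G[OF d1])
    also have "{p \<in> S2 d1. \<not> Good (\<lambda>x. if x < n then tz d1 (vl P1 x p) else 0)} = {p \<in> S2 d. \<not> Good (F p)}"
      unfolding F_def d_def ..
    finally show ?thesis unfolding N_def d_def .
  qed
  define k where "k = floor_log (card A)"
  have cA: "card A > 0" using finA Ane by (simp add: card_gt_0_iff)
  have k1: "2 ^ k \<le> card A" using floor_log_exp2_le[OF cA] by (simp add: k_def)
  have k2: "card A < 2 * 2 ^ k" using floor_log_exp2_gt by (simp add: k_def)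
  have "card A \<le> card {..<n}" using An by (rule card_mono[rotated]) simp
  then have "card A \<le> n" by simp
  then have "(2::nat) ^ k \<le> 2 ^ d" using k1 nd unfolding d_def by (meson le_trans)
  then have kd: "k \<le> d" by (simp add: power_le_imp_le_exp)
  define m where "m p = Max (F p ` A)" for p
  have tpar: "tpar \<epsilon> A (F p) = int (m p) - int L + 9" for p by (simp add: tpar_def m_def L_def)
  have sub: "{p \<in> S2 d. \<not> Good (F p)} \<subseteq> {p \<in> S2 d. \<exists>a\<in>A. k + 8 \<le> tz d (vl P1 a p)}
        \<union> {p \<in> S2 d. k \<ge> 8 \<and> (\<forall>a\<in>A. \<not> 2 ^ (k - 7) dvd vl P1 a p)}"
  proof
    fix p assume p: "p \<in> {p \<in> S2 d. \<not> Good (F p)}"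
    have "\<not> (m p \<le> k + 7 \<and> k \<le> m p + 7)"
      using p good_lemma[OF k1 k2, of "m p" L] by (auto simp: Good_def tpar bpar_def L_def)
    then consider "k + 8 \<le> m p" | "m p + 8 \<le> k" by linarith
    then show "p \<in> {p \<in> S2 d. \<exists>a\<in>A. k + 8 \<le> tz d (vl P1 a p)}
        \<union> {p \<in> S2 d. k \<ge> 8 \<and> (\<forall>a\<in>A. \<not> 2 ^ (k - 7) dvd vl P1 a p)}"
    proof cases
      case 1
      have "m p \<in> F p ` A" unfolding m_def using finA Ane by (intro Max_in) auto
      then obtain a where "a \<in> A" "m p = F p a" by blast
      then show ?thesis using 1 p FA by auto
    next
      case 2
      have "\<not> 2 ^ (k - 7) dvd vl P1 a p" if a: "a \<in> A" for a
      proof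
        assume dv: "2 ^ (k - 7) dvd vl P1 a p"
        have "k - 7 \<le> tz d (vl P1 a p)" using tz_ge[of "k - 7" d] kd dv by simp
        moreover have "F p a \<le> m p" unfolding m_def using finA a by (intro Max_ge) auto
        ultimately show False using 2 FA[OF a, of p] by linarith
      qed
      then show ?thesis using 2 p by auto
    qed
  qed
  have fS: "finite (S2 d)" by simp
  have up: "real (card {p \<in> S2 d. \<exists>a\<in>A. k + 8 \<le> tz d (vl P1 a p)}) \<le> N / 2 ^ 7"
  proof (cases "k + 8 \<le> d")
    case False
    have tl: "tz d (vl P1 a p) \<le> d" for a p
      by (rule tz_le[OF vl_less[OF degP[folded d_def] irrP d1[folded d_def]]])
    have E0: "{p \<in> S2 d. \<exists>a\<in>A. k + 8 \<le> tz d (vl P1 a p)} = {}"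
    proof (rule equals0I)
      fix p assume "p \<in> {p \<in> S2 d. \<exists>a\<in>A. k + 8 \<le> tz d (vl P1 a p)}"
      then obtain a where "k + 8 \<le> tz d (vl P1 a p)" by blast
      with tl[of a p] False show False by linarith
    qed
    show ?thesis unfolding E0 by (simp add: Npos)
  next
    case True
    have "{p \<in> S2 d. \<exists>a\<in>A. k + 8 \<le> tz d (vl P1 a p)} = (\<Union>a\<in>A. {p \<in> S2 d. 2 ^ (k + 8) dvd vl P1 a p})"
      using tz_ge[OF True] by auto
    then have "card {p \<in> S2 d. \<exists>a\<in>A. k + 8 \<le> tz d (vl P1 a p)} \<le> (\<Sum>a\<in>A. card {p \<in> S2 d. 2 ^ (k + 8) dvd vl P1 a p})"
      by (simp add: card_UN_le[OF finA])
    also have "\<dots> = (\<Sum>a\<in>A. 2 ^ (d - (k + 8)) * 2 ^ d)"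
      by (intro sum.cong refl count1[OF degP[folded d_def] irrP d1[folded d_def]] aless True)
    also have "\<dots> = card A * (2 ^ (d - (k + 8)) * 2 ^ d)" by simp
    finally have c0: "card {p \<in> S2 d. \<exists>a\<in>A. k + 8 \<le> tz d (vl P1 a p)} \<le> card A * (2 ^ (d - (k + 8)) * 2 ^ d)" .
    then have "real (card {p \<in> S2 d. \<exists>a\<in>A. k + 8 \<le> tz d (vl P1 a p)}) \<le> real (card A * (2 ^ (d - (k + 8)) * 2 ^ d))"
      by (simp only: of_nat_le_iff)
    then have c: "real (card {p \<in> S2 d. \<exists>a\<in>A. k + 8 \<le> tz d (vl P1 a p)}) \<le> real (card A) * (2 ^ (d - (k + 8)) * 2 ^ d)"
      by simp
    have "card A \<le> 2 * 2 ^ k" using k2 by simp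
    then have "real (card A) \<le> real (2 * 2 ^ k)" by (simp only: of_nat_le_iff)
    then have k2r: "real (card A) \<le> 2 * 2 ^ k" by simp
    have e: "(2::real) ^ (d - (k + 8)) * 2 ^ (k + 8) = 2 ^ d" using True by (simp add: power_add[symmetric])
    have "real (card A) * (2 ^ (d - (k + 8)) * 2 ^ d) \<le> (2 * 2 ^ k) * (2 ^ (d - (k + 8)) * 2 ^ d)"
      using k2r by (intro mult_right_mono) simp_all
    also have "\<dots> = N / 2 ^ 7" using e by (simp add: Npos power_add field_simps)
    finally show ?thesis using c by linarith
  qed
  have low: "real (card {p \<in> S2 d. k \<ge> 8 \<and> (\<forall>a\<in>A. \<not> 2 ^ (k - 7) dvd vl P1 a p)}) \<le> N / 2 ^ 7"
  proof (cases "k \<ge> 8")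
    case False then show ?thesis by (simp add: Npos)
  next
    case True
    define s where "s = k - 7"
    have sd: "s \<le> d" using kd by (simp add: s_def)
    have es: "(2::real) ^ (d - s) * 2 ^ s = 2 ^ d" using sd by (simp add: power_add[symmetric])
    have "real (card {p \<in> S2 d. \<forall>a\<in>A. \<not> 2 ^ s dvd vl P1 a p}) * (card A * (1 / 2 ^ s)) \<le> card (S2 d)"
    proof (rule second_moment[OF fS finA _ Ane])
      show "(0::real) < 1 / 2 ^ s" by simp
      fix a assume a: "a \<in> A"
      have "real (card {p \<in> S2 d. 2 ^ s dvd vl P1 a p}) = 2 ^ (d - s) * 2 ^ d"
        using count1[OF degP[folded d_def] irrP d1[folded d_def] aless[OF a] sd] by simp
      also have "\<dots> = 1 / 2 ^ s * real (card (S2 d))" using es by (simp add: card_cartesian_product field_simps)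
      finally show "real (card {p \<in> S2 d. 2 ^ s dvd vl P1 a p}) = 1 / 2 ^ s * real (card (S2 d))" .
      fix b assume b: "b \<in> A" and ab: "a \<noteq> b"
      have "real (card {p \<in> S2 d. 2 ^ s dvd vl P1 a p \<and> 2 ^ s dvd vl P1 b p}) = 2 ^ (d - s) * 2 ^ (d - s)"
        using count2[OF degP[folded d_def] irrP d1[folded d_def] aless[OF a] aless[OF b] ab sd] by simp
      also have "\<dots> = (1 / 2 ^ s)\<^sup>2 * real (card (S2 d))" using es
        by (simp add: card_cartesian_product field_simps power2_eq_square)
      finally show "real (card {p \<in> S2 d. 2 ^ s dvd vl P1 a p \<and> 2 ^ s dvd vl P1 b p}) \<le> (1 / 2 ^ s)\<^sup>2 * real (card (S2 d))"
        by simp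
    qed
    then have z: "real (card {p \<in> S2 d. \<forall>a\<in>A. \<not> 2 ^ s dvd vl P1 a p}) * real (card A) \<le> N * 2 ^ s"
      by (simp add: N_def field_simps)
    have "real (2 ^ k) \<le> real (card A)" using k1 by (simp only: of_nat_le_iff)
    then have k1r: "(2::real) ^ k \<le> real (card A)" by simp
    have "real (card {p \<in> S2 d. \<forall>a\<in>A. \<not> 2 ^ s dvd vl P1 a p}) * 2 ^ k
        \<le> real (card {p \<in> S2 d. \<forall>a\<in>A. \<not> 2 ^ s dvd vl P1 a p}) * real (card A)"
      using k1r by (intro mult_left_mono) simp_all
    also note z
    finally have z2: "real (card {p \<in> S2 d. \<forall>a\<in>A. \<not> 2 ^ s dvd vl P1 a p}) * 2 ^ k \<le> N * 2 ^ s" .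
    have "k = s + 7" using True by (simp add: s_def)
    then have ks: "(2::real) ^ k = 2 ^ s * 2 ^ 7" by (simp only: power_add)
    have "real (card {p \<in> S2 d. \<forall>a\<in>A. \<not> 2 ^ s dvd vl P1 a p}) \<le> N / 2 ^ 7"
      using z2 unfolding ks by (simp add: field_simps)
    then show ?thesis using True by (simp add: s_def)
  qed
  have "real (card {p \<in> S2 d. \<not> Good (F p)}) \<le>
     real (card {p \<in> S2 d. \<exists>a\<in>A. k + 8 \<le> tz d (vl P1 a p)}) + real (card {p \<in> S2 d. k \<ge> 8 \<and> (\<forall>a\<in>A. \<not> 2 ^ (k - 7) dvd vl P1 a p)})"
  proof -
    have "card {p \<in> S2 d. \<not> Good (F p)} \<le> card ({p \<in> S2 d. \<exists>a\<in>A. k + 8 \<le> tz d (vl P1 a p)}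
        \<union> {p \<in> S2 d. k \<ge> 8 \<and> (\<forall>a\<in>A. \<not> 2 ^ (k - 7) dvd vl P1 a p)})"
      by (rule card_mono[OF _ sub]) simp
    also have "\<dots> \<le> card {p \<in> S2 d. \<exists>a\<in>A. k + 8 \<le> tz d (vl P1 a p)} + card {p \<in> S2 d. k \<ge> 8 \<and> (\<forall>a\<in>A. \<not> 2 ^ (k - 7) dvd vl P1 a p)}"
      by (rule card_Un_le)
    finally show ?thesis by linarith
  qed
  also have "\<dots> \<le> N / 2 ^ 7 + N / 2 ^ 7" using up low by linarith
  finally have "real (card {p \<in> S2 d. \<not> Good (F p)}) / N \<le> (N / 2 ^ 7 + N / 2 ^ 7) / N"
    by (simp add: Npos divide_right_mono)
  also have "\<dots> = 2 powr (-6)" by (simp add: Npos powr_minus field_simps)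
  finally show ?thesis using prob by simp
qed

end
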